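(* Let $m$ be a positive integer and let $n,x,y$ be rational integers satisfying $n\ge 3$, $\max\{|x|,|y|\}\ge 2$ and $\Phi_n(x,y)=m$. Then $$\varphi(n)\le \frac{2}{\log 3}\log m \quad\text{and}\quad \max\{|x|,|y|\}\le \frac{2}{\sqrt 3}\, m^{1/\varphi(n)}.$$ In particular, there is no such solution when $m\in\{1,2\}$.
   Context: For $n\ge 1$, $\phi_n(X)\in\mathbb Z[X]$ denotes the $n$-th cyclotomic polynomial (degree $\varphi(n)$, $\varphi$ Euler's totient function), and the cyclotomic binary form is $\Phi_n(X,Y)=Y^{\varphi(n)}\phi_n(X/Y)$. *)

theory Defs
  imports "HOL-Analysis.Analysis" "HOL-Computational_Algebra.Polynomial" "HOL-Number_Theory.Totient"
begin

definition cyclotomic_poly :: "nat \<Rightarrow> complex poly" where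
  "cyclotomic_poly n =
     (\<Prod>k\<in>{k\<in>{1..n}. coprime k n}. [:- cis (2 * pi * real k / real n), 1:])"

text \<open>The cyclotomic binary form Phi_n(X,Y) = Y^phi(n) phi_n(X/Y), i.e. the
  homogenisation of the cyclotomic polynomial (degree phi(n)), evaluated at (x,y).\<close>
definition cyclotomic_form :: "nat \<Rightarrow> complex \<Rightarrow> complex \<Rightarrow> complex" where
  "cyclotomic_form n x y =
     (\<Sum>i\<le>totient n. coeff (cyclotomic_poly n) i * x ^ i * y ^ (totient n - i))"

end

theory Submission
  imports Defs
begin


lemma cis_root_eq_1:
  assumes "n > 0"
  shows "cis (2 * pi * real j / real n) = 1 \<longleftrightarrow> n dvd j"
proof -
  have "cis (2 * pi * real j / real n) = exp(2 * of_real pi * \<i> * of_nat j / of_nat n)"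
    by (simp add: cis_conv_exp field_simps)
  then show ?thesis using complex_root_unity_eq_1[of n j] assms by simp
qed

lemma cis_root_pow:
  "cis (2 * pi * real j / real n) ^ d = cis (2 * pi * real (j * d) / real n)"
proof -
  have e: "real d * (2 * pi * real j / real n) = 2 * pi * real (j * d) / real n"
    by (simp add: mult_ac)
  show ?thesis by (simp only: Complex.DeMoivre e)

qed

definition prim :: "nat \<Rightarrow> complex set" where
  "prim n = {z. z ^ n = 1 \<and> (\<forall>d. 0 < d \<and> d < n \<longrightarrow> z ^ d \<noteq> 1)}"

lemma prim_bij:
  assumes "n > 0"
  shows "bij_betw (\<lambda>k. cis (2 * pi * real k / real n)) {k\<in>{1..n}. coprime k n} (prim n)"
  unfolding bij_betw_def
proof (intro conjI)
  show "inj_on (\<lambda>k. cis (2 * pi * real k / real n)) {k\<in>{1..n}. coprime k n}"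
  proof (rule inj_onI)
    fix k k' assume k: "k \<in> {k\<in>{1..n}. coprime k n}" and k': "k' \<in> {k\<in>{1..n}. coprime k n}"
      and eq: "cis (2 * pi * real k / real n) = cis (2 * pi * real k' / real n)"
    have "exp(2 * of_real pi * \<i> * of_nat k / of_nat n) = exp(2 * of_real pi * \<i> * of_nat k' / of_nat n)"
      using eq by (simp add: cis_conv_exp field_simps)
    then have "k mod n = k' mod n" using complex_root_unity_eq[of n k k'] assms by simp
    moreover have "1 \<le> k" "k \<le> n" "1 \<le> k'" "k' \<le> n" using k k' by auto
    ultimately show "k = k'"
    proof (cases "k = n"; cases "k' = n")
      assume "k \<noteq> n" "k' \<noteq> n" "k mod n = k' mod n" "k \<le> n" "k' \<le> n"
      then show ?thesis by simp
    qed auto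
  qed
next
  show "(\<lambda>k. cis (2 * pi * real k / real n)) ` {k\<in>{1..n}. coprime k n} = prim n"
  proof (intro equalityI subsetI)
    fix z assume "z \<in> (\<lambda>k. cis (2 * pi * real k / real n)) ` {k\<in>{1..n}. coprime k n}"
    then obtain k where k: "k \<in> {1..n}" "coprime k n" and z: "z = cis (2 * pi * real k / real n)" by auto
    have "z ^ n = 1" unfolding z cis_root_pow by (metis cis_root_eq_1[OF assms] dvd_triv_right)
    moreover have "z ^ d \<noteq> 1" if "0 < d" "d < n" for d
    proof
      assume "z ^ d = 1"
      then have "cis (2 * pi * real (k * d) / real n) = 1" unfolding z cis_root_pow .
      then have "n dvd k * d" using cis_root_eq_1[OF assms] by blast
      then have "n dvd d" using k(2) by (metis coprime_commute coprime_dvd_mult_right_iff)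
      then show False using that by (simp add: nat_dvd_not_less)
    qed
    ultimately show "z \<in> prim n" by (auto simp: prim_def)
  next
    fix z assume z: "z \<in> prim n"
    then have "z ^ n = 1" by (simp add: prim_def)
    then obtain j where j: "j < n" "z = exp(2 * of_real pi * \<i> * of_nat j / of_nat n)"
      using complex_roots_unity[of n] assms by auto
    have zj: "z = cis (2 * pi * real j / real n)" using j by (simp add: cis_conv_exp field_simps)
    show "z \<in> (\<lambda>k. cis (2 * pi * real k / real n)) ` {k\<in>{1..n}. coprime k n}"
    proof (cases "j = 0")
      case True
      then have "z = 1" using zj by simp
      have "n = 1"
      proof (rule ccontr)
        assume "n \<noteq> 1"
        then have "0 < (1::nat)" "1 < n" using assms by auto
        then have "z ^ 1 \<noteq> 1" using z unfolding prim_def by blast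
        then show False using \<open>z = 1\<close> by simp
      qed
      then show ?thesis using \<open>z = 1\<close> by (auto intro!: image_eqI[where x=1])
    next
      case False
      have "coprime j n"
      proof (rule ccontr)
        assume nc: "\<not> coprime j n"
        define g where "g = gcd j n"
        have "g \<noteq> 1" using nc by (simp add: g_def coprime_iff_gcd_eq_1)
        moreover have "g > 0" using assms by (simp add: g_def)
        ultimately have g1: "g > 1" by simp
        have "g dvd n" by (simp add: g_def)
        then obtain d where nd: "n = g * d" by (auto simp: dvd_def)
        have "d > 0" using nd assms by (cases d) auto
        have "d < n" using nd g1 \<open>d>0\<close> by simp
        have "g dvd j" by (simp add: g_def)
        then have "g * d dvd j * d" by simp
        then have "n dvd j * d" unfolding nd .
        then have "cis (2 * pi * real (j * d) / real n) = 1" using cis_root_eq_1[OF assms] by blast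
        then have "z ^ d = 1" unfolding zj cis_root_pow .
        then show False using z \<open>d>0\<close> \<open>d<n\<close> by (auto simp: prim_def)
      qed
      then show ?thesis using False j(1) zj by (auto intro!: image_eqI[where x=j])
    qed
  qed
qed

lemma finite_prim: "n > 0 \<Longrightarrow> finite (prim n)"
  by (rule finite_subset[OF _ finite_roots_unity[of n]]) (auto simp: prim_def)

lemma card_prim: "n > 0 \<Longrightarrow> card (prim n) = totient n"
  using bij_betw_same_card[OF prim_bij[of n]]
  by (simp add: totient_def totatives_def atLeastAtMost_def greaterThanAtMost_def atLeast_def greaterThan_def Suc_le_eq)



lemma prim_disj:
  assumes "d > 0" "d' > 0" "d \<noteq> d'"
  shows "prim d \<inter> prim d' = {}"
proof (rule ccontr)
  assume "prim d \<inter> prim d' \<noteq> {}"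
  then obtain z where z: "z \<in> prim d" "z \<in> prim d'" by blast
  show False
  proof (cases "d < d'")
    case True
    then show False using z assms unfolding prim_def by blast
  next
    case False
    then have "d' < d" using assms by simp
    then show False using z assms unfolding prim_def by blast
  qed
qed

lemma roots_partition:
  assumes "n > 0"
  shows "{z::complex. z ^ n = 1} = (\<Union>d\<in>{d. d dvd n}. prim d)"
proof (intro equalityI subsetI)
  fix z :: complex assume "z \<in> {z. z ^ n = 1}"
  then have zn: "z ^ n = 1" by simp
  define d where "d = (LEAST d. 0 < d \<and> z ^ d = 1)"
  have d: "0 < d \<and> z ^ d = 1" unfolding d_def by (rule LeastI[of _ n]) (use zn assms in simp)
  have min: "\<not> (0 < e \<and> z ^ e = 1)" if "e < d" for e
    using not_less_Least[of e "\<lambda>d. 0 < d \<and> z ^ d = 1"] that unfolding d_def by blast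
  have "z ^ (n mod d) = 1"
  proof -
    have "z ^ n = z ^ (d * (n div d) + n mod d)" by (metis mult_div_mod_eq)
    also have "\<dots> = (z ^ d) ^ (n div d) * z ^ (n mod d)"
      by (simp only: power_add power_mult)
    finally show ?thesis using d zn by simp
  qed
  then have "n mod d = 0" using min[of "n mod d"] d by (meson mod_less_divisor neq0_conv)
  then have "d dvd n" by (simp add: dvd_eq_mod_eq_0)
  moreover have "z \<in> prim d" using d min unfolding prim_def by blast
  ultimately show "z \<in> (\<Union>d\<in>{d. d dvd n}. prim d)" by blast
next
  fix z assume "z \<in> (\<Union>d\<in>{d. d dvd n}. prim d)"
  then obtain d where "d dvd n" "z \<in> prim d" by blast
  then obtain k where "n = d * k" "z ^ d = 1" by (auto simp: prim_def dvd_def)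
  then show "z \<in> {z. z ^ n = 1}" by (simp add: power_mult)
qed

definition Psi :: "nat \<Rightarrow> complex poly" where
  "Psi n = (\<Prod>z\<in>prim n. [:-z, 1:])"

lemma lead_coeff_Psi: "lead_coeff (Psi n) = 1"
  unfolding Psi_def lead_coeff_prod by simp

lemma degree_Psi: "n > 0 \<Longrightarrow> degree (Psi n) = totient n"
  unfolding Psi_def by (subst degree_prod_eq_sum_degree) (auto simp: card_prim)

lemma poly_Psi: "poly (Psi n) c = (\<Prod>z\<in>prim n. c - z)"
  unfolding Psi_def poly_prod by simp

lemma xn1_prod:
  assumes "n > 0"
  shows "monom 1 n - 1 = (\<Prod>z\<in>{z::complex. z ^ n = 1}. [:-z, 1:])"
proof (rule poly_eqI_degree_lead_coeff[where n=n and A="{z::complex. z ^ n = 1}"])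
  have fin: "finite {z::complex. z ^ n = 1}" using assms by (intro finite_roots_unity) simp
  have card: "card {z::complex. z ^ n = 1} = n" using card_roots_unity_eq[OF assms] .
  have deg: "degree (\<Prod>z\<in>{z::complex. z ^ n = 1}. [:-z, 1:]) = n"
    by (subst degree_prod_eq_sum_degree) (auto simp: card)
  show "coeff (monom 1 n - 1) n = coeff (\<Prod>z\<in>{z::complex. z ^ n = 1}. [:-z, 1:]) n"
  proof -
    have "coeff (\<Prod>z\<in>{z::complex. z ^ n = 1}. [:-z, 1:]) n = 1"
      using lead_coeff_prod[of "\<lambda>z. [:-z, 1:]" "{z::complex. z ^ n = 1}"] deg by simp
    moreover have "coeff (monom 1 n - 1 :: complex poly) n = 1"
      using assms by (simp add: coeff_1)
    ultimately show ?thesis by simp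
  qed
  show "n \<le> card {z::complex. z ^ n = 1}" using card by simp
  show "degree (monom 1 n - 1 :: complex poly) \<le> n"
    by (rule order.trans[OF degree_diff_le_max]) (simp add: degree_monom_le)
  show "degree (\<Prod>z\<in>{z::complex. z ^ n = 1}. [:-z, 1:]) \<le> n" using deg by simp
  fix z :: complex assume z: "z \<in> {z. z ^ n = 1}"
  have "poly (\<Prod>z\<in>{z::complex. z ^ n = 1}. [:-z, 1:]) z = (\<Prod>w\<in>{z::complex. z ^ n = 1}. z - w)"
    by (simp add: poly_prod)
  also have "\<dots> = 0" using z fin by (intro prod_zero) auto
  finally show "poly (monom 1 n - 1) z = poly (\<Prod>z\<in>{z::complex. z ^ n = 1}. [:-z, 1:]) z"
    using z by (simp add: poly_monom)
qed

lemma xn1_Psi: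
  assumes "n > 0"
  shows "monom 1 n - 1 = (\<Prod>d\<in>{d. d dvd n}. Psi d)"
proof -
  have "monom 1 n - 1 = (\<Prod>z\<in>(\<Union>d\<in>{d. d dvd n}. prim d). [:-z, 1:])"
    using xn1_prod[OF assms] roots_partition[OF assms] by simp
  also have "\<dots> = (\<Prod>d\<in>{d. d dvd n}. Psi d)"
    unfolding Psi_def
  proof (rule prod.UNION_disjoint)
    show "finite {d. d dvd n}" using assms by simp
    show "\<forall>i\<in>{d. d dvd n}. finite (prim i)" using assms
      by (auto intro!: finite_prim simp: dvd_pos_nat)
    show "\<forall>i\<in>{d. d dvd n}. \<forall>j\<in>{d. d dvd n}. i \<noteq> j \<longrightarrow> prim i \<inter> prim j = {}"
    proof (intro ballI impI)
      fix i j assume "i \<in> {d. d dvd n}" "j \<in> {d. d dvd n}" "i \<noteq> j"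
      then show "prim i \<inter> prim j = {}" using assms by (intro prim_disj) (auto simp: dvd_pos_nat)
    qed
  qed
  finally show ?thesis .
qed

definition intpoly :: "complex poly \<Rightarrow> bool" where
  "intpoly p \<longleftrightarrow> (\<forall>i. coeff p i \<in> \<int>)"

lemma intpoly_mult: "intpoly p \<Longrightarrow> intpoly q \<Longrightarrow> intpoly (p * q)"
  unfolding intpoly_def coeff_mult by (auto intro!: Ints_sum Ints_mult)

lemma intpoly_1: "intpoly 1"
  unfolding intpoly_def by (simp add: coeff_1)

lemma intpoly_prod: "(\<And>x. x \<in> A \<Longrightarrow> intpoly (f x)) \<Longrightarrow> intpoly (\<Prod>x\<in>A. f x)"
  by (induction A rule: infinite_finite_induct) (auto intro: intpoly_mult intpoly_1)

lemma intpoly_diff: "intpoly p \<Longrightarrow> intpoly q \<Longrightarrow> intpoly (p - q)"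
  unfolding intpoly_def by (auto intro!: Ints_diff)

lemma intpoly_add: "intpoly p \<Longrightarrow> intpoly q \<Longrightarrow> intpoly (p + q)"
  unfolding intpoly_def by (auto intro!: Ints_add)

lemma intpoly_monom: "c \<in> \<int> \<Longrightarrow> intpoly (monom c k)"
  unfolding intpoly_def by auto

lemma intpoly_quot:
  assumes "P = F * Q" "intpoly P" "intpoly Q" "lead_coeff Q = 1"
  shows "intpoly F"
  using assms
proof (induction "degree F" arbitrary: F P rule: less_induct)
  case (less F P)
  show ?case
  proof (cases "F = 0")
    case True then show ?thesis by (simp add: intpoly_def)
  next
    case False
    define d where "d = degree F"
    define f where "f = lead_coeff F"
    have Q0: "Q \<noteq> 0" using less.prems(4) by auto
    have "lead_coeff P = f" using less.prems(1,4) by (simp add: lead_coeff_mult f_def)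
    then have fI: "f \<in> \<int>" using less.prems(2) unfolding intpoly_def by metis
    define F' where "F' = F - monom f d"
    have cF': "coeff F' i = 0" if "i \<ge> d" for i
      using that by (auto simp: F'_def f_def d_def coeff_eq_0)
    have "intpoly F'"
    proof (cases "F' = 0")
      case True then show ?thesis by (simp add: intpoly_def)
    next
      case False
      have "degree F' \<le> d" by (rule degree_le) (use cF' in auto)
      moreover have "degree F' \<noteq> d" using cF'[of d] False by auto
      ultimately have lt: "degree F' < degree F" by (simp add: d_def)
      have "P - monom f d * Q = F' * Q" using less.prems(1) by (simp add: F'_def algebra_simps)
      moreover have "intpoly (P - monom f d * Q)"
        using less.prems(2,3) fI by (intro intpoly_diff intpoly_mult intpoly_monom)
      ultimately show ?thesis using less.hyps[OF lt, of "P - monom f d * Q"] less.prems(3,4) by simp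
    qed
    then have "intpoly (F' + monom f d)" using fI by (intro intpoly_add intpoly_monom)
    then show ?thesis by (simp add: F'_def)
  qed
qed

lemma intpoly_Psi: "n > 0 \<Longrightarrow> intpoly (Psi n)"
proof (induction n rule: less_induct)
  case (less n)
  define Q where "Q = (\<Prod>d\<in>{d. d dvd n} - {n}. Psi d)"
  have fin: "finite {d. d dvd n}" using less.prems by simp
  have "monom 1 n - 1 = Psi n * Q"
    unfolding xn1_Psi[OF less.prems] Q_def using fin
    by (subst prod.remove[of _ n]) auto
  moreover have "intpoly (monom 1 n - 1)" by (intro intpoly_diff intpoly_monom intpoly_1) simp
  moreover have "intpoly Q" unfolding Q_def
  proof (rule intpoly_prod)
    fix d assume "d \<in> {d. d dvd n} - {n}"
    then have "d dvd n" "d \<noteq> n" by auto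
    then have "d < n" "d > 0" using less.prems dvd_imp_le[of d n] dvd_pos_nat by auto
    then show "intpoly (Psi d)" using less.IH by blast
  qed
  moreover have "lead_coeff Q = 1" unfolding Q_def lead_coeff_prod by (simp add: lead_coeff_Psi)
  ultimately show ?case using intpoly_quot by blast
qed

lemma Ints_norm_ge1: "(w::complex) \<in> \<int> \<Longrightarrow> w \<noteq> 0 \<Longrightarrow> norm w \<ge> 1"
  by (auto elim!: Ints_cases)

lemma poly_Psi_Int:
  assumes "n > 0" "c \<in> \<int>"
  shows "poly (Psi n) c \<in> \<int>"
  using intpoly_Psi[OF assms(1)] assms(2) unfolding poly_altdef intpoly_def
  by (auto intro!: Ints_sum Ints_mult Ints_power)

lemma prod_one_minus_ge1:
  assumes "n \<ge> 2"
  shows "(\<Prod>z\<in>prim n. norm (1 - z)) \<ge> 1"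
proof -
  have "poly (Psi n) 1 \<in> \<int>" using assms by (intro poly_Psi_Int) auto
  moreover have "poly (Psi n) 1 \<noteq> 0"
  proof
    assume "poly (Psi n) 1 = 0"
    then have "1 \<in> prim n" unfolding poly_Psi using finite_prim[of n] assms by (auto simp: prod_zero_iff)
    then have "\<forall>d. 0 < d \<and> d < n \<longrightarrow> (1::complex) ^ d \<noteq> 1" unfolding prim_def by blast
    then show False by (rule allE[of _ 1]) (use assms in simp)
  qed
  ultimately have "norm (poly (Psi n) 1) \<ge> 1" by (rule Ints_norm_ge1)
  then show ?thesis unfolding poly_Psi prod_norm .
qed

lemma prod_one_plus_ge1:
  assumes "n \<ge> 3"
  shows "(\<Prod>z\<in>prim n. norm (1 + z)) \<ge> 1"
proof -
  have "poly (Psi n) (-1) \<in> \<int>" using assms by (intro poly_Psi_Int) auto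
  moreover have "poly (Psi n) (-1) \<noteq> 0"
  proof
    assume "poly (Psi n) (-1) = 0"
    then have "-1 \<in> prim n" unfolding poly_Psi using finite_prim[of n] assms by (auto simp: prod_zero_iff)
    then have "\<forall>d. 0 < d \<and> d < n \<longrightarrow> (-1::complex) ^ d \<noteq> 1" unfolding prim_def by blast
    then show False by (rule allE[of _ 2]) (use assms in simp)
  qed
  ultimately have "norm (poly (Psi n) (-1)) \<ge> 1" by (rule Ints_norm_ge1)
  also have "norm (poly (Psi n) (-1)) = (\<Prod>z\<in>prim n. norm (1 + z))"
    unfolding poly_Psi prod_norm[symmetric]
    by (intro prod.cong refl) (metis add.commute minus_diff_eq norm_minus_cancel diff_minus_eq_add)
  finally show ?thesis .
qed



lemma cyc_Psi: "n > 0 \<Longrightarrow> cyclotomic_poly n = Psi n"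
  unfolding cyclotomic_poly_def Psi_def
  using prod.reindex_bij_betw[OF prim_bij[of n], of "\<lambda>z. [:-z, 1:]"] by simp

lemma form_prod:
  assumes "n > 0"
  shows "cyclotomic_form n x y = (\<Prod>z\<in>prim n. x - z * y)"
proof -
  define N where "N = totient n"
  have degN: "degree (Psi n) = N" using degree_Psi[OF assms] N_def by simp
  have cardN: "card (prim n) = N" using card_prim[OF assms] N_def by simp
  have fin: "finite (prim n)" using finite_prim[OF assms] .
  have lc: "coeff (Psi n) N = 1" using lead_coeff_Psi[of n] degN by simp
  have form: "cyclotomic_form n x y = (\<Sum>i\<le>N. coeff (Psi n) i * x ^ i * y ^ (N - i))"
    unfolding cyclotomic_form_def cyc_Psi[OF assms] N_def ..
  show ?thesis
  proof (cases "y = 0")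
    case True
    have "(\<Sum>i\<le>N. coeff (Psi n) i * x ^ i * y ^ (N - i)) = (\<Sum>i\<le>N. if i = N then x ^ N else 0)"
      by (intro sum.cong refl) (auto simp: True lc)
    also have "\<dots> = x ^ N" by simp
    also have "\<dots> = (\<Prod>z\<in>prim n. x - z * y)" using True cardN by simp
    finally show ?thesis using form by simp
  next
    case False
    have "(\<Sum>i\<le>N. coeff (Psi n) i * x ^ i * y ^ (N - i))
        = (\<Sum>i\<le>N. y ^ N * (coeff (Psi n) i * (x / y) ^ i))"
    proof (intro sum.cong refl)
      fix i assume "i \<in> {..N}"
      then have "y ^ N = y ^ i * y ^ (N - i)" by (simp add: power_add[symmetric])
      then show "coeff (Psi n) i * x ^ i * y ^ (N - i) = y ^ N * (coeff (Psi n) i * (x / y) ^ i)"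
        using False by (simp add: power_divide field_simps)
    qed
    also have "\<dots> = y ^ N * poly (Psi n) (x / y)"
      by (simp add: poly_altdef degN sum_distrib_left)
    also have "\<dots> = (\<Prod>z\<in>prim n. y) * (\<Prod>z\<in>prim n. x / y - z)"
      using cardN by (simp add: poly_Psi)
    also have "\<dots> = (\<Prod>z\<in>prim n. y * (x / y - z))" by (simp add: prod.distrib)
    also have "\<dots> = (\<Prod>z\<in>prim n. x - z * y)"
      using False by (intro prod.cong refl) (simp add: field_simps)
    finally show ?thesis using form by simp
  qed
qed

lemma ln_step:
  fixes a b u :: real
  assumes "a \<ge> 0" "b \<ge> 0" "a + b > 0" "u > 0"
  shows "ln (a + b * u) \<ge> ln (a + b) + b / (a + b) * ln u"
proof -
  define t where "t = b / (a + b)"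
  have t: "0 \<le> t" "t \<le> 1" using assms by (auto simp: t_def field_simps)
  have cv: "convex_on {0<..} (\<lambda>x. - ln x)" using ln_concave by (simp add: concave_on_def)
  have "- ln ((1 - t) *\<^sub>R 1 + t *\<^sub>R u) \<le> (1 - t) * (- ln 1) + t * (- ln u)"
    using convex_onD[OF cv t, of 1 u] assms by simp
  then have 1: "t * ln u \<le> ln ((1 - t) + t * u)" by simp
  have "1 - t = a / (a + b)" using assms by (simp add: t_def field_simps)
  then have "(1 - t) + t * u = (a + b * u) / (a + b)" by (simp add: t_def add_divide_distrib)
  also have "ln \<dots> = ln (a + b * u) - ln (a + b)"
  proof -
    have "a + b * u > 0"
    proof (cases "b = 0")
      case True then show ?thesis using assms by simp
    next
      case False then show ?thesis using assms by (simp add: add_nonneg_pos)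
    qed
    then show ?thesis using assms(3) by (rule ln_divide_pos)
  qed
  finally show ?thesis using 1 t_def by simp
qed

lemma prod_ge:
  fixes a b :: real and u :: "'a \<Rightarrow> real"
  assumes "finite A" "a \<ge> 0" "b \<ge> 0" "a + b > 0" "\<And>k. k \<in> A \<Longrightarrow> u k > 0" "(\<Prod>k\<in>A. u k) \<ge> 1"
  shows "(\<Prod>k\<in>A. a + b * u k) \<ge> (a + b) ^ card A"
proof -
  have pos: "a + b * u k > 0" if "k \<in> A" for k
  proof (cases "b = 0")
    case True then show ?thesis using assms by simp
  next
    case False then show ?thesis using assms(2,3) assms(5)[OF that] by (simp add: add_nonneg_pos)
  qed
  have "ln ((a + b) ^ card A) = card A * ln (a + b)" by (simp add: ln_realpow)
  also have "\<dots> \<le> card A * ln (a + b) + b / (a + b) * ln (\<Prod>k\<in>A. u k)"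
    using assms by (simp add: divide_nonneg_pos)
  also have "\<dots> = (\<Sum>k\<in>A. ln (a + b) + b / (a + b) * ln (u k))"
  proof -
    have lnp: "ln (\<Prod>k\<in>A. u k) = (\<Sum>k\<in>A. ln (u k))"
      using assms(1) by (rule ln_prod) (use assms(5) in force)
    show ?thesis by (simp add: lnp sum.distrib sum_distrib_left)
  qed
  also have "\<dots> \<le> (\<Sum>k\<in>A. ln (a + b * u k))"
    using assms by (intro sum_mono ln_step) auto
  also have "\<dots> = ln (\<Prod>k\<in>A. a + b * u k)"
  proof -
    have "ln (\<Prod>k\<in>A. a + b * u k) = (\<Sum>k\<in>A. ln (a + b * u k))"
      using assms(1) by (rule ln_prod) (use pos in force)
    then show ?thesis by simp
  qed
  finally have "ln ((a + b) ^ card A) \<le> ln (\<Prod>k\<in>A. a + b * u k)" .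
  then show ?thesis using assms pos by (subst (asm) ln_le_cancel_iff) (auto intro: prod_pos)
qed



lemma norm_prim: "n > 0 \<Longrightarrow> z \<in> prim n \<Longrightarrow> norm z = 1"
proof -
  assume n: "n > 0" and z: "z \<in> prim n"
  then have "norm z ^ n = 1 ^ n" by (simp add: prim_def norm_power[symmetric])
  show "norm z = 1" by (rule power_eq_imp_eq_base[OF \<open>norm z ^ n = 1 ^ n\<close>]) (use n in auto)
qed

lemma sq_ident:
  fixes X Y :: real and z :: complex
  assumes "norm z = 1"
  shows "norm (of_real X - z * of_real Y) ^ 2 = (X - Y) ^ 2 + X * Y * norm (1 - z) ^ 2"
    and "norm (of_real X - z * of_real Y) ^ 2 = (X + Y) ^ 2 + (- (X * Y)) * norm (1 + z) ^ 2"
proof -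
  have r: "(Re z) ^ 2 + (Im z) ^ 2 = 1" using assms cmod_power2[of z] by simp
  show "norm (of_real X - z * of_real Y) ^ 2 = (X - Y) ^ 2 + X * Y * norm (1 - z) ^ 2"
    unfolding cmod_power2 using r by simp algebra
  show "norm (of_real X - z * of_real Y) ^ 2 = (X + Y) ^ 2 + (- (X * Y)) * norm (1 + z) ^ 2"
    unfolding cmod_power2 using r by simp algebra
qed

lemma quad_bound:
  fixes X Y :: real
  shows "X ^ 2 - \<bar>X * Y\<bar> + Y ^ 2 \<ge> 3 / 4 * (max \<bar>X\<bar> \<bar>Y\<bar>) ^ 2"
proof -
  define p where "p = \<bar>X\<bar>"
  define q where "q = \<bar>Y\<bar>"
  have e: "X ^ 2 - \<bar>X * Y\<bar> + Y ^ 2 = p ^ 2 - p * q + q ^ 2"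
    by (simp add: p_def q_def abs_mult)
  show ?thesis
  proof (cases "p \<ge> q")
    case True
    have "0 \<le> (p / 2 - q) ^ 2" by simp
    then have "3 / 4 * p ^ 2 \<le> p ^ 2 - p * q + q ^ 2" by (simp add: power2_eq_square algebra_simps)
    then show ?thesis using True e by (simp add: p_def q_def max_def)
  next
    case False
    have "0 \<le> (q / 2 - p) ^ 2" by simp
    then have "3 / 4 * q ^ 2 \<le> p ^ 2 - p * q + q ^ 2" by (simp add: power2_eq_square algebra_simps)
    then show ?thesis using False e by (simp add: p_def q_def max_def)
  qed
qed

theorem theorem1p1:
  fixes m x y :: int and n :: nat
  assumes "m > 0" and "n \<ge> 3" and "max \<bar>x\<bar> \<bar>y\<bar> \<ge> 2"
    and "cyclotomic_form n (of_int x) (of_int y) = of_int m"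
  shows "real (totient n) \<le> 2 / ln 3 * ln (real_of_int m)
    \<and> real_of_int (max \<bar>x\<bar> \<bar>y\<bar>) \<le> 2 / sqrt 3 * (real_of_int m) powr (1 / real (totient n))
    \<and> m \<notin> {1, 2}"
proof -
  define N where "N = totient n"
  define X where "X = real_of_int x"
  define Y where "Y = real_of_int y"
  define M where "M = real_of_int (max \<bar>x\<bar> \<bar>y\<bar>)"
  have n0: "n > 0" using assms by simp
  have fin: "finite (prim n)" using finite_prim[OF n0] .
  have cardN: "card (prim n) = N" using card_prim[OF n0] N_def by simp
  have N2: "N \<ge> 2"
  proof -
    have "even N" "N > 0" using totient_even[of n] assms n0 by (auto simp: N_def)
    then show ?thesis by presburger
  qed
  have MXY: "M = max \<bar>X\<bar> \<bar>Y\<bar>" by (simp add: M_def X_def Y_def)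
  have M2: "M \<ge> 2" using assms(3) by (simp add: M_def)
  have M4: "M ^ 2 \<ge> 4"
  proof -
    have "M ^ 2 \<ge> 2 ^ 2" using M2 by (intro power_mono) auto
    then show ?thesis by simp
  qed
  have meq: "complex_of_int m = (\<Prod>z\<in>prim n. of_real X - z * of_real Y)"
    using assms(4) form_prod[OF n0] by (simp add: X_def Y_def)
  have "real_of_int m = norm (complex_of_int m)" using assms(1) by simp
  also have "\<dots> = (\<Prod>z\<in>prim n. norm (of_real X - z * of_real Y))"
    unfolding meq prod_norm ..
  finally have "(real_of_int m) ^ 2 = (\<Prod>z\<in>prim n. norm (of_real X - z * of_real Y) ^ 2)"
    by (simp add: prod_power_distrib)
  also have "\<dots> \<ge> (X ^ 2 - \<bar>X * Y\<bar> + Y ^ 2) ^ N"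
  proof (cases "X * Y \<ge> 0")
    case True
    have "(\<Prod>z\<in>prim n. norm (of_real X - z * of_real Y) ^ 2)
        = (\<Prod>z\<in>prim n. (X - Y) ^ 2 + X * Y * norm (1 - z) ^ 2)"
      by (intro prod.cong refl sq_ident(1) norm_prim[OF n0])
    also have "\<dots> \<ge> ((X - Y) ^ 2 + X * Y) ^ card (prim n)"
    proof (rule prod_ge[OF fin])
      show "0 \<le> (X - Y) ^ 2" by simp
      show "0 \<le> X * Y" by fact
      have "(X - Y) ^ 2 + X * Y = X ^ 2 - \<bar>X * Y\<bar> + Y ^ 2"
        using True by (simp add: power2_eq_square algebra_simps)
      also have "\<dots> \<ge> 3 / 4 * M ^ 2" using quad_bound MXY by simp
      finally show "0 < (X - Y) ^ 2 + X * Y" using M4 by linarith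
      fix z assume z: "z \<in> prim n"
      have "z \<noteq> 1"
      proof
        assume "z = 1"
        then have "\<forall>d. 0 < d \<and> d < n \<longrightarrow> (1::complex) ^ d \<noteq> 1" using z unfolding prim_def by blast
        then show False by (rule allE[of _ 1]) (use assms in simp)
      qed
      then show "0 < norm (1 - z) ^ 2" by simp
    next
      have "(\<Prod>z\<in>prim n. norm (1 - z) ^ 2) = (\<Prod>z\<in>prim n. norm (1 - z)) ^ 2"
        by (simp add: prod_power_distrib)
      also have "\<dots> \<ge> 1" using prod_one_minus_ge1[of n] assms by (simp add: one_le_power)
      finally show "1 \<le> (\<Prod>z\<in>prim n. norm (1 - z) ^ 2)" .
    qed
    also have "(X - Y) ^ 2 + X * Y = X ^ 2 - \<bar>X * Y\<bar> + Y ^ 2"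
      using True by (simp add: power2_eq_square algebra_simps)
    finally show ?thesis using cardN by simp
  next
    case False
    have "(\<Prod>z\<in>prim n. norm (of_real X - z * of_real Y) ^ 2)
        = (\<Prod>z\<in>prim n. (X + Y) ^ 2 + (- (X * Y)) * norm (1 + z) ^ 2)"
      by (intro prod.cong refl sq_ident(2) norm_prim[OF n0])
    also have "\<dots> \<ge> ((X + Y) ^ 2 + (- (X * Y))) ^ card (prim n)"
    proof (rule prod_ge[OF fin])
      show "0 \<le> (X + Y) ^ 2" by simp
      show "0 \<le> - (X * Y)" using False by simp
      have "(X + Y) ^ 2 + (- (X * Y)) = X ^ 2 - \<bar>X * Y\<bar> + Y ^ 2"
        using False by (simp add: power2_eq_square algebra_simps)
      also have "\<dots> \<ge> 3 / 4 * M ^ 2" using quad_bound MXY by simp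
      finally show "0 < (X + Y) ^ 2 + (- (X * Y))" using M4 by linarith
      fix z assume z: "z \<in> prim n"
      have "z \<noteq> -1"
      proof
        assume "z = -1"
        then have "\<forall>d. 0 < d \<and> d < n \<longrightarrow> (-1::complex) ^ d \<noteq> 1" using z unfolding prim_def by blast
        then show False by (rule allE[of _ 2]) (use assms in simp)
      qed
      then have "1 + z \<noteq> 0" by (metis add_eq_0_iff)
      then show "0 < norm (1 + z) ^ 2" by simp
    next
      have "(\<Prod>z\<in>prim n. norm (1 + z) ^ 2) = (\<Prod>z\<in>prim n. norm (1 + z)) ^ 2"
        by (simp add: prod_power_distrib)
      also have "\<dots> \<ge> 1" using prod_one_plus_ge1[of n] assms by (simp add: one_le_power)
      finally show "1 \<le> (\<Prod>z\<in>prim n. norm (1 + z) ^ 2)" .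
    qed
    also have "(X + Y) ^ 2 + (- (X * Y)) = X ^ 2 - \<bar>X * Y\<bar> + Y ^ 2"
      using False by (simp add: power2_eq_square algebra_simps)
    finally show ?thesis using cardN by simp
  qed
  finally have main0: "(X ^ 2 - \<bar>X * Y\<bar> + Y ^ 2) ^ N \<le> (real_of_int m) ^ 2" .
  define c where "c = sqrt 3 / 2 * M"
  have c0: "c > 0" using M2 by (simp add: c_def)
  have cK: "c ^ 2 = 3 / 4 * M ^ 2" unfolding c_def by (simp add: power_mult_distrib power_divide)
  have "(c ^ 2) ^ N \<le> (X ^ 2 - \<bar>X * Y\<bar> + Y ^ 2) ^ N"
  proof (rule power_mono)
    have qb: "3 / 4 * M ^ 2 \<le> X ^ 2 - \<bar>X * Y\<bar> + Y ^ 2" using quad_bound[of X Y] MXY by simp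
    then show "c ^ 2 \<le> X ^ 2 - \<bar>X * Y\<bar> + Y ^ 2" using cK by linarith
    show "0 \<le> c ^ 2" by simp
  qed
  then have main: "(c ^ 2) ^ N \<le> (real_of_int m) ^ 2" using main0 by linarith
  have c3: "c ^ 2 \<ge> 3"
  proof -
    have "M ^ 2 \<ge> 2 ^ 2" using M2 by (intro power_mono) auto
    then show ?thesis using cK by simp
  qed
  have m3: "(3::real) ^ N \<le> (real_of_int m) ^ 2"
    using main power_mono[OF c3, of N] by linarith
  have "real N * ln 3 = ln ((3::real) ^ N)" by (simp add: ln_realpow)
  also have "\<dots> \<le> ln ((real_of_int m) ^ 2)" using m3 assms(1) by (subst ln_le_cancel_iff) auto
  also have "\<dots> = 2 * ln (real_of_int m)" by (simp add: ln_realpow)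
  finally have "real N * ln 3 \<le> 2 * ln (real_of_int m)" .
  moreover have "ln (3::real) > 0" by simp
  ultimately have P1: "real N \<le> 2 / ln 3 * ln (real_of_int m)"
    by (simp add: pos_le_divide_eq mult.commute)
  have "(c ^ 2) ^ N = c ^ (2 * N)" by (rule power_mult[symmetric])
  also have "\<dots> = c ^ (N * 2)" by (simp only: mult.commute)
  also have "\<dots> = (c ^ N) ^ 2" by (rule power_mult)
  finally have eq: "(c ^ 2) ^ N = (c ^ N) ^ 2" .
  have "(c ^ N) ^ 2 \<le> (real_of_int m) ^ 2" using main eq by linarith
  then have cm: "c ^ N \<le> real_of_int m" by (rule power2_le_imp_le) (use assms(1) in simp)
  have cpow: "c ^ N = c powr (real N)" using c0 by (rule powr_realpow[symmetric])
  have "(c powr (real N)) powr (1 / real N) = c powr (real N * (1 / real N))" by (rule powr_powr)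
  also have "real N * (1 / real N) = 1" using N2 by simp
  also have "c powr 1 = c" using c0 by simp
  finally have e1: "(c powr (real N)) powr (1 / real N) = c" .
  have e2: "c = (c ^ N) powr (1 / real N)" by (simp only: cpow e1)
  have "(c ^ N) powr (1 / real N) \<le> (real_of_int m) powr (1 / real N)"
    by (rule powr_mono2) (use cm c0 in simp_all)
  then have cle: "c \<le> (real_of_int m) powr (1 / real N)" using e2 by linarith
  have Mc: "M = 2 / sqrt 3 * c" unfolding c_def by simp
  have "2 / sqrt 3 * c \<le> 2 / sqrt 3 * (real_of_int m) powr (1 / real N)"
    by (rule mult_left_mono[OF cle]) simp
  then have P2: "M \<le> 2 / sqrt 3 * (real_of_int m) powr (1 / real N)" using Mc by linarith
  have "(3::real) ^ 2 \<le> 3 ^ N" by (rule power_increasing[OF N2]) simp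
  then have "(3::real) ^ 2 \<le> (real_of_int m) ^ 2" using m3 by linarith
  then have "3 \<le> real_of_int m" by (rule power2_le_imp_le) (use assms(1) in simp)
  then have "m \<ge> 3" by linarith
  then have P3: "m \<notin> {1, 2}" by simp
  have "real (totient n) \<le> 2 / ln 3 * ln (real_of_int m)" using P1 by (simp only: N_def)
  moreover have "real_of_int (max \<bar>x\<bar> \<bar>y\<bar>) \<le> 2 / sqrt 3 * (real_of_int m) powr (1 / real (totient n))"
    using P2 by (simp only: N_def M_def)
  ultimately show ?thesis using P3 by blast
qed


end
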